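(* The dual-rail Bell state $Q=\frac{1}{\sqrt2}\big(a^\dagger_1a^\dagger_3+a^\dagger_2a^\dagger_4\big)$ (i.e. $(|1,0,1,0\rangle+|0,1,0,1\rangle)/\sqrt2$) cannot be generated by heralded linear optics from any multi-mode Fock input state containing three photons. In particular, for $N=5$, input $|1,1,1,0,0\rangle$ and heralding pattern $(1)$ on mode $5$, there is no complex $5\times5$ matrix $A$ and no $\gamma\in\mathbb{C}$ with $\gamma G=Q$.
   Context: Heralded linear-optical state generation model. States with a fixed photon number are homogeneous polynomials in commuting variables $a^\dagger_1,\dots,a^\dagger_N$ applied to the vacuum. Given $N$ modes, an arbitrary complex $N\times N$ matrix $A$ (not required to be unitary), and a Fock input $\prod_{i=1}^N\frac{1}{\sqrt{n_i!}}(a^\dagger_{i,\mathrm{in}})^{n_i}|0\rangle$, the output is $F|0\rangle$ with $F=\prod_{i=1}^N\frac{1}{\sqrt{n_i!}}\big(\sum_{j=1}^N A_{i,j}a^\dagger_j\big)^{n_i}$. Heralding the last $M$ modes on the pattern $(m_1,\dots,m_M)$ (entries $\ge0$), $m=\sum_jm_j$, gives $G=\frac{1}{\prod_jm_j!}\,\frac{\partial^{m}F}{\partial(a^\dagger_{N-M+1})^{m_1}\cdots\partial(a^\dagger_N)^{m_M}}\Big|_{a^\dagger_{N-M+1}=\cdots=a^\dagger_N=0}$, a polynomial in $a^\dagger_1,\dots,a^\dagger_{N-M}$. A target $Q$ on the first $N_T\le N-M$ modes (other unheralded modes in vacuum) can be generated from a given input and heralding pattern if there exist a complex $N\times N$ matrix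 $A$ and $\gamma\in\mathbb{C}$ with $\gamma G=Q$; it can be generated from an $n$-photon Fock input if this holds for some number of modes, some Fock input with $n$ photons and some heralding pattern (necessarily with $n-\deg Q$ photons). *)

theory Defs
  imports Complex_Main "HOL-Library.Poly_Mapping"
begin

text \<open>Polynomials in commuting variables a_0^dag, a_1^dag, ... (mode i is variable i,
  modes are 0-indexed): a monomial is an exponent vector nat =>0 nat, a polynomial
  is a finitely supported map from monomials to complex coefficients.\<close>

type_synonym cpoly = "(nat \<Rightarrow>\<^sub>0 nat) \<Rightarrow>\<^sub>0 complex"

definition cvar :: "nat \<Rightarrow> cpoly" where
  "cvar i = Poly_Mapping.single (Poly_Mapping.single i 1) 1"

definition cconst :: "complex \<Rightarrow> cpoly" where
  "cconst c = Poly_Mapping.single 0 c"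

definition output_poly :: "nat \<Rightarrow> (nat \<Rightarrow> nat \<Rightarrow> complex) \<Rightarrow> (nat \<Rightarrow> nat) \<Rightarrow> cpoly" where
  "output_poly N A n =
     (\<Prod>i<N. cconst (1 / complex_of_real (sqrt (fact (n i))))
              * (\<Sum>j<N. cconst (A i j) * cvar j) ^ n i)"

text \<open>Heralding the last M of the N modes (modes N-M+k, k < M) on pattern m
  (m k photons in mode N-M+k).  The operation
  (1/prod m_k!) d^m F / d(a_{N-M+1})^{m_1}... evaluated at the heralded variables = 0
  maps a monomial x^alpha to x^(alpha - mu) if alpha agrees with mu = m on the
  heralded modes, and to 0 otherwise; extended linearly.\<close>

definition herald_monomial :: "nat \<Rightarrow> nat \<Rightarrow> (nat \<Rightarrow> nat) \<Rightarrow> (nat \<Rightarrow>\<^sub>0 nat)" where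
  "herald_monomial N M m = (\<Sum>k<M. Poly_Mapping.single (N - M + k) (m k))"

definition herald :: "nat \<Rightarrow> nat \<Rightarrow> (nat \<Rightarrow> nat) \<Rightarrow> cpoly \<Rightarrow> cpoly" where
  "herald N M m F =
     (\<Sum>\<alpha>\<in>Poly_Mapping.keys F.
        if (\<forall>k<M. Poly_Mapping.lookup \<alpha> (N - M + k) = m k)
        then Poly_Mapping.single (\<alpha> - herald_monomial N M m) (Poly_Mapping.lookup F \<alpha>)
        else 0)"

definition generable_from :: "cpoly \<Rightarrow> nat \<Rightarrow> (nat \<Rightarrow> nat) \<Rightarrow> nat \<Rightarrow> (nat \<Rightarrow> nat) \<Rightarrow> bool" where
  "generable_from Q N n M m \<longleftrightarrow>
     (\<exists>A :: nat \<Rightarrow> nat \<Rightarrow> complex. \<exists>\<gamma> :: complex.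
        cconst \<gamma> * herald N M m (output_poly N A n) = Q)"

text \<open>Dual-rail Bell state (1/sqrt 2)(a1 a3 + a2 a4); with 0-indexed modes 0,1,2,3.\<close>

definition bell_dual_rail :: cpoly where
  "bell_dual_rail = cconst (1 / complex_of_real (sqrt 2)) * (cvar 0 * cvar 2 + cvar 1 * cvar 3)"

end

theory Submission
  imports Defs
begin

lemma cconst_add: "cconst (a + b) = cconst a + cconst b"
  by (simp add: cconst_def single_add)
lemma cconst_mult: "cconst (a * b) = cconst a * cconst b"
  by (simp add: cconst_def mult_single)
lemma cconst_0[simp]: "cconst 0 = 0" by (simp add: cconst_def)
lemma cconst_1[simp]: "cconst 1 = 1" by (simp add: cconst_def)
lemma cconst_sum: "cconst (\<Sum>i\<in>I. f i) = (\<Sum>i\<in>I. cconst (f i))"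
  by (induction I rule: infinite_finite_induct) (auto simp: cconst_add)
lemma cconst_prod: "cconst (\<Prod>i\<in>I. f i) = (\<Prod>i\<in>I. cconst (f i))"
  by (induction I rule: infinite_finite_induct) (auto simp: cconst_mult)
lemma cconst_power: "cconst (a ^ k) = cconst a ^ k"
  by (induction k) (auto simp: cconst_mult)
lemma lookup_cconst_mult: "Poly_Mapping.lookup (cconst c * p) b = c * Poly_Mapping.lookup p b"
proof -
  have "cconst c * p = Poly_Mapping.map ((*) c) p"
    by (simp add: cconst_def mult_map_scale_conv_mult)
  then show ?thesis by (simp add: Poly_Mapping.map.rep_eq when_def)
qed

definition monp :: "(nat \<Rightarrow> cpoly) \<Rightarrow> (nat \<Rightarrow>\<^sub>0 nat) \<Rightarrow> cpoly" where
  "monp g b = (\<Prod>i\<in>Poly_Mapping.keys b. g i ^ Poly_Mapping.lookup b i)"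

definition subst :: "(nat \<Rightarrow> cpoly) \<Rightarrow> cpoly \<Rightarrow> cpoly" where
  "subst g P = (\<Sum>a\<in>Poly_Mapping.keys P. cconst (Poly_Mapping.lookup P a) * monp g a)"

lemma monp_superset: "finite K \<Longrightarrow> Poly_Mapping.keys b \<subseteq> K \<Longrightarrow>
   monp g b = (\<Prod>i\<in>K. g i ^ Poly_Mapping.lookup b i)"
  unfolding monp_def
  by (rule prod.mono_neutral_left) (auto simp: in_keys_iff)

lemma monp_add: "monp g (a + b) = monp g a * monp g b"
proof -
  let ?K = "Poly_Mapping.keys a \<union> Poly_Mapping.keys b"
  have "monp g (a + b) = (\<Prod>i\<in>?K. g i ^ Poly_Mapping.lookup (a+b) i)"
    by (rule monp_superset) (auto dest: keys_add[THEN subsetD])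
  also have "\<dots> = (\<Prod>i\<in>?K. g i ^ Poly_Mapping.lookup a i) * (\<Prod>i\<in>?K. g i ^ Poly_Mapping.lookup b i)"
    by (simp add: lookup_add power_add prod.distrib)
  also have "\<dots> = monp g a * monp g b"
    by (simp add: monp_superset[symmetric])
  finally show ?thesis .
qed

lemma monp_zero[simp]: "monp g 0 = 1" by (simp add: monp_def)
lemma monp_single1[simp]: "monp g (Poly_Mapping.single i 1) = g i" unfolding monp_def by simp

lemma subst_superset: "finite K \<Longrightarrow> Poly_Mapping.keys P \<subseteq> K \<Longrightarrow>
   subst g P = (\<Sum>a\<in>K. cconst (Poly_Mapping.lookup P a) * monp g a)"
  unfolding subst_def
  by (rule sum.mono_neutral_left) (auto simp: in_keys_iff)

lemma subst_add: "subst g (P + Q) = subst g P + subst g Q"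
proof -
  let ?K = "Poly_Mapping.keys P \<union> Poly_Mapping.keys Q"
  have "subst g (P + Q) = (\<Sum>a\<in>?K. cconst (Poly_Mapping.lookup (P+Q) a) * monp g a)"
    by (rule subst_superset) (auto dest: keys_add[THEN subsetD])
  also have "\<dots> = (\<Sum>a\<in>?K. cconst (Poly_Mapping.lookup P a) * monp g a) + (\<Sum>a\<in>?K. cconst (Poly_Mapping.lookup Q a) * monp g a)"
    by (simp add: lookup_add cconst_add distrib_right sum.distrib)
  also have "\<dots> = subst g P + subst g Q"
    by (simp add: subst_superset[symmetric])
  finally show ?thesis .
qed

lemma subst_zero[simp]: "subst g 0 = 0" by (simp add: subst_def)

lemma subst_sum: "subst g (\<Sum>i\<in>I. f i) = (\<Sum>i\<in>I. subst g (f i))"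
  by (induction I rule: infinite_finite_induct) (auto simp: subst_add)

lemma subst_single: "subst g (Poly_Mapping.single a c) = cconst c * monp g a"
  by (subst subst_superset[of "{a}"]) auto

lemma poly_expand: "P = (\<Sum>a\<in>Poly_Mapping.keys P. Poly_Mapping.single a (Poly_Mapping.lookup P a))"
proof (rule poly_mapping_eqI)
  fix k
  show "Poly_Mapping.lookup P k = Poly_Mapping.lookup (\<Sum>a\<in>Poly_Mapping.keys P. Poly_Mapping.single a (Poly_Mapping.lookup P a)) k"
    by (simp add: lookup_sum lookup_single when_def in_keys_iff)
qed

lemma subst_mult: "subst g (P * Q) = subst g P * subst g Q"
proof -
  have "P * Q = (\<Sum>a\<in>Poly_Mapping.keys P. Poly_Mapping.single a (Poly_Mapping.lookup P a)) *
                (\<Sum>b\<in>Poly_Mapping.keys Q. Poly_Mapping.single b (Poly_Mapping.lookup Q b))"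
    using poly_expand[of P] poly_expand[of Q] by simp
  also have "\<dots> = (\<Sum>a\<in>Poly_Mapping.keys P. \<Sum>b\<in>Poly_Mapping.keys Q.
      Poly_Mapping.single (a+b) (Poly_Mapping.lookup P a * Poly_Mapping.lookup Q b))"
    by (simp add: sum_product mult_single)
  finally have "subst g (P * Q) = (\<Sum>a\<in>Poly_Mapping.keys P. \<Sum>b\<in>Poly_Mapping.keys Q.
      cconst (Poly_Mapping.lookup P a) * monp g a * (cconst (Poly_Mapping.lookup Q b) * monp g b))"
    by (simp add: subst_sum subst_single cconst_mult monp_add mult_ac)
  also have "\<dots> = subst g P * subst g Q"
    by (simp add: subst_def sum_product)
  finally show ?thesis .
qed

lemma subst_cconst[simp]: "subst g (cconst c) = cconst c"
  by (simp add: cconst_def subst_single)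
lemma subst_one[simp]: "subst g 1 = 1"
  using subst_cconst[of g 1] by simp
lemma subst_cvar[simp]: "subst g (cvar i) = g i"
  unfolding cvar_def subst_single monp_single1 by simp
lemma subst_power: "subst g (p ^ k) = subst g p ^ k"
  by (induction k) (auto simp: subst_mult)
lemma subst_prod: "subst g (\<Prod>i\<in>I. f i) = (\<Prod>i\<in>I. subst g (f i))"
  by (induction I rule: infinite_finite_induct) (auto simp: subst_mult)


definition cprod :: "(nat \<Rightarrow> complex) \<Rightarrow> (nat \<Rightarrow>\<^sub>0 nat) \<Rightarrow> complex" where
  "cprod x b = (\<Prod>i\<in>Poly_Mapping.keys b. x i ^ Poly_Mapping.lookup b i)"

lemma cprod_superset: "finite K \<Longrightarrow> Poly_Mapping.keys b \<subseteq> K \<Longrightarrow>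
   cprod x b = (\<Prod>i\<in>K. x i ^ Poly_Mapping.lookup b i)"
  unfolding cprod_def
  by (rule prod.mono_neutral_left) (auto simp: in_keys_iff)

lemma monp_cconst: "monp (\<lambda>i. cconst (x i)) b = cconst (cprod x b)"
  by (simp add: monp_def cprod_def cconst_prod cconst_power)

definition evp :: "(nat \<Rightarrow> complex) \<Rightarrow> cpoly \<Rightarrow> complex" where
  "evp x P = Poly_Mapping.lookup (subst (\<lambda>i. cconst (x i)) P) 0"

lemma lookup_cconst: "Poly_Mapping.lookup (cconst c) b = (if b = 0 then c else 0)"
  by (simp add: cconst_def lookup_single when_def)

lemma evp_cconst_mult: "evp x (cconst c * P) = c * evp x P"
  by (simp add: evp_def subst_mult lookup_cconst_mult)

lemma subst_cx: "subst (\<lambda>i. cconst (x i)) P = cconst (evp x P)"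
proof -
  have "subst (\<lambda>i. cconst (x i)) P = cconst (\<Sum>a\<in>Poly_Mapping.keys P. Poly_Mapping.lookup P a * cprod x a)"
    by (simp add: subst_def monp_cconst cconst_sum cconst_mult)
  then show ?thesis by (simp add: evp_def lookup_cconst)
qed

lemma evp_mult: "evp x (P * Q) = evp x P * evp x Q"
  unfolding evp_def subst_mult by (simp only: subst_cx) (simp add: lookup_cconst_mult lookup_cconst)
lemma evp_add: "evp x (P + Q) = evp x P + evp x Q"
  by (simp add: evp_def subst_add lookup_add)
lemma evp_cvar: "evp x (cvar i) = x i"
  by (simp add: evp_def lookup_cconst)
lemma evp_cconst: "evp x (cconst c) = c"
  by (simp add: evp_def lookup_cconst)

lemma evp_bell: "evp x bell_dual_rail = (x 0 * x 2 + x 1 * x 3) / complex_of_real (sqrt 2)"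
  by (simp add: bell_dual_rail_def evp_mult evp_add evp_cvar evp_cconst)

lemma cvar_power: "cvar i ^ k = Poly_Mapping.single (Poly_Mapping.single i k) 1"
  by (induction k) (simp_all add: cvar_def mult_single single_add[symmetric])

lemma cvar_prod: "(\<Prod>i\<in>K. cvar i ^ e i) = Poly_Mapping.single (\<Sum>i\<in>K. Poly_Mapping.single i (e i)) 1"
  by (induction K rule: infinite_finite_induct) (auto simp: cvar_power mult_single)


definition gH :: "nat \<Rightarrow> nat \<Rightarrow> (nat \<Rightarrow> complex) \<Rightarrow> nat \<Rightarrow> cpoly" where
  "gH N M x j = (if N - M \<le> j \<and> j < N then cvar j else cconst (x j))"

definition hpart :: "nat \<Rightarrow> nat \<Rightarrow> (nat \<Rightarrow>\<^sub>0 nat) \<Rightarrow> (nat \<Rightarrow>\<^sub>0 nat)" where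
  "hpart N M a = (\<Sum>i\<in>Poly_Mapping.keys a \<inter> {N-M..<N}. Poly_Mapping.single i (Poly_Mapping.lookup a i))"

lemma lookup_hpart: "Poly_Mapping.lookup (hpart N M a) j = (if N-M \<le> j \<and> j < N then Poly_Mapping.lookup a j else 0)"
proof -
  have "Poly_Mapping.lookup (hpart N M a) j = (\<Sum>i\<in>Poly_Mapping.keys a \<inter> {N-M..<N}. if i = j then Poly_Mapping.lookup a i else 0)"
    by (simp add: hpart_def lookup_sum lookup_single when_def)
  also have "\<dots> = (if j \<in> Poly_Mapping.keys a \<inter> {N-M..<N} then Poly_Mapping.lookup a j else 0)"
    by (simp add: sum.delta')
  finally show ?thesis by (auto simp: in_keys_iff)
qed

lemma lookup_hm: "M \<le> N \<Longrightarrow> Poly_Mapping.lookup (herald_monomial N M m) j = (if N-M \<le> j \<and> j < N then m (j - (N-M)) else 0)"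
proof -
  assume MN: "M \<le> N"
  have "Poly_Mapping.lookup (herald_monomial N M m) j = (\<Sum>k<M. if k = j - (N-M) \<and> N-M \<le> j then m k else 0)"
    unfolding herald_monomial_def lookup_sum lookup_single when_def
    by (rule sum.cong) auto
  also have "\<dots> = (if N-M \<le> j \<and> j < N then m (j - (N-M)) else 0)"
    using MN by (auto simp: sum.If_cases)
  finally show ?thesis .
qed

lemma agree_iff: "M \<le> N \<Longrightarrow> (\<forall>k<M. Poly_Mapping.lookup a (N-M+k) = m k) \<longleftrightarrow> hpart N M a = herald_monomial N M m"
proof
  assume MN: "M \<le> N" and ag: "\<forall>k<M. Poly_Mapping.lookup a (N-M+k) = m k"
  show "hpart N M a = herald_monomial N M m"
  proof (rule poly_mapping_eqI)
    fix j
    show "Poly_Mapping.lookup (hpart N M a) j = Poly_Mapping.lookup (herald_monomial N M m) j"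
    proof (cases "N-M \<le> j \<and> j < N")
      case True
      then have "j = N - M + (j - (N-M))" "j - (N-M) < M" by auto
      then show ?thesis using ag True MN by (metis lookup_hpart lookup_hm)
    next
      case False
      then show ?thesis using MN by (auto simp: lookup_hpart lookup_hm)
    qed
  qed
next
  assume MN: "M \<le> N" and eq: "hpart N M a = herald_monomial N M m"
  show "\<forall>k<M. Poly_Mapping.lookup a (N-M+k) = m k"
  proof (intro allI impI)
    fix k assume "k < M"
    then have "Poly_Mapping.lookup (hpart N M a) (N-M+k) = Poly_Mapping.lookup (herald_monomial N M m) (N-M+k)"
      using eq by simp
    moreover have j: "N-M \<le> N-M+k" "N-M+k < N" "N-M+k-(N-M) = k" using \<open>k < M\<close> MN by auto
    ultimately show "Poly_Mapping.lookup a (N-M+k) = m k"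
      by (simp only: lookup_hpart lookup_hm[OF MN] j simp_thms if_True)
  qed
qed

lemma monp_gH: "monp (gH N M x) a = Poly_Mapping.single (hpart N M a)
   (\<Prod>i\<in>Poly_Mapping.keys a - {N-M..<N}. x i ^ Poly_Mapping.lookup a i)"
proof -
  let ?K = "Poly_Mapping.keys a" and ?H = "{N-M..<N}"
  have "monp (gH N M x) a = (\<Prod>i\<in>?K. if i \<in> ?H then cvar i ^ Poly_Mapping.lookup a i else cconst (x i) ^ Poly_Mapping.lookup a i)"
    unfolding monp_def gH_def by (rule prod.cong) auto
  also have "\<dots> = (\<Prod>i\<in>?K \<inter> ?H. cvar i ^ Poly_Mapping.lookup a i) * (\<Prod>i\<in>?K - ?H. cconst (x i) ^ Poly_Mapping.lookup a i)"
    by (simp add: prod.If_cases Diff_eq atLeastLessThan_def atLeast_def lessThan_def Collect_conj_eq)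
  also have "\<dots> = Poly_Mapping.single (hpart N M a) 1 * cconst (\<Prod>i\<in>?K - ?H. x i ^ Poly_Mapping.lookup a i)"
    by (simp add: cvar_prod hpart_def cconst_prod cconst_power)
  finally show ?thesis by (simp add: cconst_def mult_single)
qed

lemma lookup_monp_gH: "M \<le> N \<Longrightarrow> Poly_Mapping.lookup (monp (gH N M x) a) (herald_monomial N M m) =
   (if (\<forall>k<M. Poly_Mapping.lookup a (N-M+k) = m k) then cprod x (a - herald_monomial N M m) else 0)"
proof -
  assume MN: "M \<le> N"
  let ?mu = "herald_monomial N M m" and ?K = "Poly_Mapping.keys a" and ?H = "{N-M..<N}"
  show ?thesis
  proof (cases "hpart N M a = ?mu")
    case False
    then show ?thesis using agree_iff[OF MN] by (simp add: monp_gH lookup_single when_def)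
  next
    case True
    have lk: "Poly_Mapping.lookup (a - ?mu) i = (if i \<in> ?H then 0 else Poly_Mapping.lookup a i)" for i
      using arg_cong[OF True, of "\<lambda>p. Poly_Mapping.lookup p i"]
      using MN by (auto simp: lookup_minus lookup_hpart lookup_hm split: if_splits)
    have "cprod x (a - ?mu) = (\<Prod>i\<in>?K. x i ^ Poly_Mapping.lookup (a - ?mu) i)"
      by (rule cprod_superset) (auto simp: in_keys_iff lk split: if_splits)
    also have "\<dots> = (\<Prod>i\<in>?K. if i \<in> ?H then 1 else x i ^ Poly_Mapping.lookup a i)"
      by (rule prod.cong) (auto simp: lk)
    also have "\<dots> = (\<Prod>i\<in>?K - ?H. x i ^ Poly_Mapping.lookup a i)"
      by (simp add: prod.If_cases Diff_eq atLeastLessThan_def atLeast_def lessThan_def Collect_conj_eq)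
    finally show ?thesis using True agree_iff[OF MN] by (simp add: monp_gH)
  qed
qed

lemma evp_sum: "evp x (\<Sum>i\<in>I. f i) = (\<Sum>i\<in>I. evp x (f i))"
  by (simp add: evp_def subst_sum lookup_sum)
lemma evp_zero: "evp x 0 = 0"
  by (simp add: evp_def)
lemma evp_single: "evp x (Poly_Mapping.single b c) = c * cprod x b"
  by (simp add: evp_def subst_single monp_cconst lookup_cconst_mult lookup_cconst)

lemma herald_ev: "M \<le> N \<Longrightarrow> evp x (herald N M m F) = Poly_Mapping.lookup (subst (gH N M x) F) (herald_monomial N M m)"
proof -
  assume MN: "M \<le> N"
  have "evp x (herald N M m F) = (\<Sum>a\<in>Poly_Mapping.keys F. if (\<forall>k<M. Poly_Mapping.lookup a (N-M+k) = m k)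
      then Poly_Mapping.lookup F a * cprod x (a - herald_monomial N M m) else 0)"
    unfolding herald_def evp_sum by (rule sum.cong) (auto simp: evp_single evp_zero)
  also have "\<dots> = Poly_Mapping.lookup (subst (gH N M x) F) (herald_monomial N M m)"
    unfolding subst_def lookup_sum lookup_cconst_mult lookup_monp_gH[OF MN]
    by (rule sum.cong) auto
  finally show ?thesis .
qed


lemma kernel_aux: "length rs = k \<Longrightarrow> finite J \<Longrightarrow> k < card J \<Longrightarrow>
  \<exists>v::nat \<Rightarrow> complex. (\<exists>j\<in>J. v j \<noteq> 0) \<and> (\<forall>j. j \<notin> J \<longrightarrow> v j = 0) \<and> (\<forall>r\<in>set rs. (\<Sum>j\<in>J. r j * v j) = 0)"
proof (induction k arbitrary: rs J)
  case 0
  then have Nil: "rs = []" by simp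
  from 0 obtain j0 where "j0 \<in> J" by fastforce
  then show ?case using Nil by (intro exI[of _ "\<lambda>j. if j = j0 then 1 else 0"]) auto
next
  case (Suc k)
  then obtain r rs0 where rs: "rs = r # rs0" by (cases rs) auto
  have len0: "length rs0 = k" using Suc.prems rs by simp
  show ?case
  proof (cases "\<forall>j\<in>J. r j = 0")
    case True
    have "k < card J" using Suc.prems by simp
    from Suc.IH[OF len0 Suc.prems(2) this] obtain v where
      v: "(\<exists>j\<in>J. v j \<noteq> 0)" "(\<forall>j. j \<notin> J \<longrightarrow> v j = 0)" "(\<forall>r\<in>set rs0. (\<Sum>j\<in>J. r j * v j) = 0)"
      by auto
    then show ?thesis using True rs by (intro exI[of _ v]) auto
  next
    case False
    then obtain p where p: "p \<in> J" "r p \<noteq> 0" by auto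
    define rs' where "rs' = map (\<lambda>r'. \<lambda>j. r' j - r' p / r p * r j) rs0"
    have fin: "finite (J - {p})" using Suc.prems(2) by simp
    have len: "length rs' = k" using len0 by (simp add: rs'_def)
    have card: "k < card (J - {p})" using Suc.prems p by simp
    from Suc.IH[OF len fin card] obtain v where
      v: "(\<exists>j\<in>J - {p}. v j \<noteq> 0)" "(\<forall>j. j \<notin> J - {p} \<longrightarrow> v j = 0)"
         "(\<forall>r\<in>set rs'. (\<Sum>j\<in>J - {p}. r j * v j) = 0)"
      by blast
    define S where "S = (\<Sum>j\<in>J - {p}. r j * v j)"
    define t where "t = - S / r p"
    define v' where "v' = v(p := t)"
    have sumJ: "(\<Sum>j\<in>J. f j * v' j) = f p * t + (\<Sum>j\<in>J - {p}. f j * v j)" for f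
    proof -
      have "(\<Sum>j\<in>J. f j * v' j) = f p * v' p + (\<Sum>j\<in>J - {p}. f j * v' j)"
        using Suc.prems(2) p(1) by (simp add: sum.remove)
      also have "(\<Sum>j\<in>J - {p}. f j * v' j) = (\<Sum>j\<in>J - {p}. f j * v j)"
        by (rule sum.cong) (auto simp: v'_def)
      finally show ?thesis by (simp add: v'_def)
    qed
    have r0: "(\<Sum>j\<in>J. r j * v' j) = 0"
      unfolding sumJ t_def S_def using p(2) by (simp add: field_simps)
    have "(\<Sum>j\<in>J. r' j * v' j) = 0" if "r' \<in> set rs0" for r'
    proof -
      let ?c = "r' p / r p"
      let ?r'' = "\<lambda>j. r' j - ?c * r j"
      have "(\<Sum>j\<in>J. r' j * v' j) = (\<Sum>j\<in>J. ?r'' j * v' j) + ?c * (\<Sum>j\<in>J. r j * v' j)"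
        by (simp add: algebra_simps sum.distrib sum_distrib_left sum_subtractf)
      also have "\<dots> = (\<Sum>j\<in>J. ?r'' j * v' j)" using r0 by simp
      also have "\<dots> = ?r'' p * t + (\<Sum>j\<in>J - {p}. ?r'' j * v j)" by (rule sumJ)
      also have "?r'' p = 0" using p(2) by simp
      also have "(\<Sum>j\<in>J - {p}. ?r'' j * v j) = 0"
        using v(3) that by (auto simp: rs'_def)
      finally show ?thesis by simp
    qed
    moreover have "\<exists>j\<in>J. v' j \<noteq> 0" using v(1) by (auto simp: v'_def)
    moreover have "\<forall>j. j \<notin> J \<longrightarrow> v' j = 0" using v(2) p(1) by (auto simp: v'_def)
    ultimately show ?thesis using r0 rs by (intro exI[of _ v']) auto
  qed
qed

lemma kernel: "finite J \<Longrightarrow> length rs < card J \<Longrightarrow>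
  \<exists>v::nat \<Rightarrow> complex. (\<exists>j\<in>J. v j \<noteq> 0) \<and> (\<forall>j. j \<notin> J \<longrightarrow> v j = 0) \<and> (\<forall>r\<in>set rs. (\<Sum>j\<in>J. r j * v j) = 0)"
  using kernel_aux by blast


lemma subst_output_shift:
  assumes vH: "\<And>j. N - M \<le> j \<Longrightarrow> v j = 0"
    and vk: "\<And>i. i < N \<Longrightarrow> n i > 0 \<Longrightarrow> (\<Sum>j<N. A i j * v j) = 0"
  shows "subst (gH N M (\<lambda>j. w j + v j)) (output_poly N A n) = subst (gH N M w) (output_poly N A n)"
proof -
  have g: "gH N M (\<lambda>j. w j + v j) j = gH N M w j + cconst (v j)" for j
    using vH[of j] by (auto simp: gH_def cconst_add)
  have L: "subst (gH N M (\<lambda>j. w j + v j)) (\<Sum>j<N. cconst (A i j) * cvar j)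
        = subst (gH N M w) (\<Sum>j<N. cconst (A i j) * cvar j) + cconst (\<Sum>j<N. A i j * v j)" for i
    by (simp add: subst_sum subst_mult g distrib_left sum.distrib cconst_sum cconst_mult)
  show ?thesis
    unfolding output_poly_def subst_prod subst_mult subst_power subst_cconst
  proof (rule prod.cong[OF refl])
    fix i assume "i \<in> {..<N}"
    then show "cconst (1 / complex_of_real (sqrt (fact (n i)))) * subst (gH N M (\<lambda>j. w j + v j)) (\<Sum>j<N. cconst (A i j) * cvar j) ^ n i =
         cconst (1 / complex_of_real (sqrt (fact (n i)))) * subst (gH N M w) (\<Sum>j<N. cconst (A i j) * cvar j) ^ n i"
      using vk[of i] by (cases "n i = 0") (auto simp: L)
  qed
qed

lemma first_part:
  assumes MN: "M \<le> N" and four: "4 \<le> N - M" and sum3: "(\<Sum>i<N. n i) = 3"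
  shows "\<not> generable_from bell_dual_rail N n M m"
proof
  assume "generable_from bell_dual_rail N n M m"
  then obtain A \<gamma> where eq: "cconst \<gamma> * herald N M m (output_poly N A n) = bell_dual_rail"
    unfolding generable_from_def by blast
  define S where "S = {i. i < N \<and> n i > 0}"
  have finS: "finite S" by (simp add: S_def)
  have "card S = (\<Sum>i\<in>S. 1::nat)" by simp
  also have "\<dots> \<le> (\<Sum>i\<in>S. n i)" by (rule sum_mono) (auto simp: S_def)
  also have "\<dots> \<le> (\<Sum>i<N. n i)" by (rule sum_mono2) (auto simp: S_def)
  finally have cardS: "card S \<le> 3" using sum3 by simp
  define rs where "rs = map A (sorted_list_of_set S)"
  have "length rs < card {..<4::nat}" using cardS finS by (simp add: rs_def)
  from kernel[OF _ this] obtain v where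
    v: "\<exists>j\<in>{..<4::nat}. v j \<noteq> 0" "\<forall>j. j \<notin> {..<4} \<longrightarrow> v j = 0"
       "\<forall>r\<in>set rs. (\<Sum>j<4. r j * v j) = 0"
    by auto
  have vH: "v j = 0" if "N - M \<le> j" for j using v(2) four that by auto
  have vk: "(\<Sum>j<N. A i j * v j) = 0" if "i < N" "n i > 0" for i
  proof -
    have "i \<in> S" using that by (simp add: S_def)
    then have "(\<Sum>j<4. A i j * v j) = 0" using v(3) finS by (auto simp: rs_def)
    moreover have "(\<Sum>j<4. A i j * v j) = (\<Sum>j<N. A i j * v j)"
      by (rule sum.mono_neutral_left) (use v(2) four in auto)
    ultimately show ?thesis by simp
  qed
  have inv: "evp (\<lambda>j. w j + v j) bell_dual_rail = evp w bell_dual_rail" for w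
    unfolding eq[symmetric] evp_cconst_mult herald_ev[OF MN]
    using subst_output_shift[OF vH vk] by simp
  have s: "complex_of_real (sqrt 2) \<noteq> 0" by simp
  define e where "e = (\<lambda>(k::nat) (j::nat). if j = k then (1::complex) else 0)"
  have q: "(w 0 + v 0) * (w 2 + v 2) + (w 1 + v 1) * (w 3 + v 3) = w 0 * w 2 + w 1 * w 3" for w :: "nat \<Rightarrow> complex"
    using inv[of w] s by (simp add: evp_bell)
  have q0: "v 0 * v 2 + v 1 * v 3 = 0" using q[of "\<lambda>_. 0"] by simp
  have "v 2 = 0" using q[of "e 0"] q0 by (simp add: e_def algebra_simps)
  moreover have "v 0 = 0" using q[of "e 2"] q0 by (simp add: e_def algebra_simps)
  moreover have "v 3 = 0" using q[of "e 1"] q0 by (simp add: e_def algebra_simps)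
  moreover have "v 1 = 0" using q[of "e 3"] q0 by (simp add: e_def algebra_simps)
  ultimately show False using v(1) by (auto simp: lessThan_def numeral_eq_Suc less_Suc_eq)
qed

theorem mainTheorem3:
  shows "(\<forall>N M (n :: nat \<Rightarrow> nat) (m :: nat \<Rightarrow> nat).
            M \<le> N \<longrightarrow> 4 \<le> N - M \<longrightarrow> (\<Sum>i<N. n i) = 3 \<longrightarrow>
            \<not> generable_from bell_dual_rail N n M m)
       \<and> \<not> generable_from bell_dual_rail 5 (\<lambda>i. if i < 3 then 1 else 0) 1 (\<lambda>k. 1)"
proof
  show "\<forall>N M (n :: nat \<Rightarrow> nat) (m :: nat \<Rightarrow> nat).
            M \<le> N \<longrightarrow> 4 \<le> N - M \<longrightarrow> (\<Sum>i<N. n i) = 3 \<longrightarrow>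
            \<not> generable_from bell_dual_rail N n M m"
    using first_part by blast
  have "(\<Sum>i<5::nat. (if i < 3 then 1 else 0::nat)) = 3"
    by (simp add: numeral_eq_Suc)
  then show "\<not> generable_from bell_dual_rail 5 (\<lambda>i. if i < 3 then 1 else 0) 1 (\<lambda>k. 1)"
    by (intro first_part) auto
qed

end
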